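(* Let $M,M'\in\mathrm{Mat}(2,\mathbb{Z})$ have the same trace, the same determinant and the same $\mathrm{mgcd}$. Then for every $n\in\mathbb{N}$, the pretail trees of the fixed point $0$ under the actions $x\mapsto Mx\bmod n$ and $x\mapsto M'x\bmod n$ on $(\mathbb{Z}/n\mathbb{Z})^2$ are isomorphic (as rooted trees).
   Context: For $M=\begin{pmatrix}a&b\\c&d\end{pmatrix}$, $\mathrm{mgcd}(M)=\gcd(b,c,d-a)$. A point $y$ is periodic if $M^ky\equiv y\pmod n$ for some $k\ge1$. A pretail of $0$ is a set $\{x,Mx,\dots,M^jx=0\}$ (mod $n$) in which $0$ is the only periodic point. The pretail tree of $0$ is the rooted tree with root $0$ whose vertices are the points of all pretails of $0$, with $x\ne0$ a child of $Mx$. *)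

theory Defs
  imports "HOL-Analysis.Analysis"
begin

text \<open>Integer 2x2 matrices are \<open>int^2^2\<close>; entries \<open>M$1$1 = a, M$1$2 = b, M$2$1 = c, M$2$2 = d\<close>.\<close>

definition mgcd :: "int^2^2 \<Rightarrow> int" where
  "mgcd M = gcd (M$1$2) (gcd (M$2$1) (M$2$2 - M$1$1))"

text \<open>Points of (Z/nZ)^2, represented by canonical residues in {0..n-1}.\<close>
definition points :: "nat \<Rightarrow> (int^2) set" where
  "points n = {x. \<forall>i. 0 \<le> x$i \<and> x$i < int n}"

definition act :: "int^2^2 \<Rightarrow> nat \<Rightarrow> int^2 \<Rightarrow> int^2" where
  "act M n x = (\<chi> i. (M *v x) $ i mod int n)"

definition periodic :: "int^2^2 \<Rightarrow> nat \<Rightarrow> int^2 \<Rightarrow> bool" where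
  "periodic M n y \<longleftrightarrow> (\<exists>k\<ge>1. (act M n ^^ k) y = y)"

definition pretail_vertices :: "int^2^2 \<Rightarrow> nat \<Rightarrow> (int^2) set" where
  "pretail_vertices M n = {x \<in> points n. \<exists>j. (act M n ^^ j) x = 0 \<and>
      (\<forall>i\<le>j. periodic M n ((act M n ^^ i) x) \<longrightarrow> (act M n ^^ i) x = 0)}"

definition pretail_child :: "int^2^2 \<Rightarrow> nat \<Rightarrow> int^2 \<Rightarrow> int^2 \<Rightarrow> bool" where
  "pretail_child M n x y \<longleftrightarrow> x \<in> pretail_vertices M n \<and> x \<noteq> 0 \<and> y = act M n x"

definition pretail_trees_iso :: "int^2^2 \<Rightarrow> int^2^2 \<Rightarrow> nat \<Rightarrow> bool" where
  "pretail_trees_iso M M' n \<longleftrightarrow> (\<exists>f. bij_betw f (pretail_vertices M n) (pretail_vertices M' n)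
      \<and> f 0 = 0
      \<and> (\<forall>x\<in>pretail_vertices M n. \<forall>y\<in>pretail_vertices M n.
            pretail_child M n x y \<longleftrightarrow> pretail_child M' n (f x) (f y)))"

end

theory Submission imports Defs "HOL-Number_Theory.Number_Theory"
begin


definition conjm :: "int^2^2 \<Rightarrow> int^2^2 \<Rightarrow> nat \<Rightarrow> (int^2 \<Rightarrow> int^2) \<Rightarrow> (int^2 \<Rightarrow> int^2) \<Rightarrow> bool" where
  "conjm M M' n f g \<longleftrightarrow> (\<forall>x. f (act M n x) = act M' n (f x)) \<and> (\<forall>x. g (act M' n x) = act M n (g x))
     \<and> (\<forall>x\<in>points n. f x \<in> points n \<and> g x \<in> points n \<and> g (f x) = x \<and> f (g x) = x) \<and> f 0 = 0 \<and> g 0 = 0"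

lemma zero_points: "n \<ge> 1 \<Longrightarrow> 0 \<in> points n" by (auto simp add: points_def)

lemma act_points: assumes "n \<ge> 1" shows "act M n x \<in> points n"
proof -
  have "int n > 0" using assms by simp
  then show ?thesis by (simp add: points_def act_def)
qed

lemma act_zero: "act M n 0 = 0"
  by (simp add: act_def vec_eq_iff)

lemma conjm_sym: assumes "conjm M M' n f g" shows "conjm M' M n g f"
  using assms unfolding conjm_def by auto

lemma conjm_trans: assumes "conjm M1 M2 n f g" "conjm M2 M3 n f' g'"
  shows "conjm M1 M3 n (f' \<circ> f) (g \<circ> g')"
  using assms unfolding conjm_def by auto

lemma conjm_iter: assumes "conjm M M' n f g"
  shows "f ((act M n ^^ k) x) = (act M' n ^^ k) (f x)"
  using assms unfolding conjm_def by (induction k) auto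

lemma iter_points: "n \<ge> 1 \<Longrightarrow> x \<in> points n \<Longrightarrow> (act M n ^^ k) x \<in> points n"
  by (induction k) (auto simp: act_points)

lemma conjm_periodic: assumes "conjm M M' n f g" "n \<ge> 1" "y \<in> points n"
  shows "periodic M' n (f y) \<longleftrightarrow> periodic M n y"
proof
  assume "periodic M' n (f y)"
  then obtain k where k: "k \<ge> 1" "(act M' n ^^ k) (f y) = f y" unfolding periodic_def by blast
  then have "f ((act M n ^^ k) y) = f y" using conjm_iter[OF assms(1)] by simp
  then have "g (f ((act M n ^^ k) y)) = g (f y)" by simp
  then have "(act M n ^^ k) y = y" using assms iter_points[OF assms(2,3)] unfolding conjm_def by metis
  then show "periodic M n y" using k unfolding periodic_def by blast
next
  assume "periodic M n y"
  then obtain k where k: "k \<ge> 1" "(act M n ^^ k) y = y" unfolding periodic_def by blast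
  then show "periodic M' n (f y)" using conjm_iter[OF assms(1)] unfolding periodic_def by metis
qed

lemma conjm_vert: assumes "conjm M M' n f g" "n \<ge> 1" "x \<in> pretail_vertices M n"
  shows "f x \<in> pretail_vertices M' n"
proof -
  from assms(3) obtain j where x: "x \<in> points n" "(act M n ^^ j) x = 0"
    "\<forall>i\<le>j. periodic M n ((act M n ^^ i) x) \<longrightarrow> (act M n ^^ i) x = 0"
    unfolding pretail_vertices_def by blast
  have fx: "f x \<in> points n" using assms(1) x(1) unfolding conjm_def by blast
  have "(act M' n ^^ j) (f x) = 0" using conjm_iter[OF assms(1)] x(2) assms(1) unfolding conjm_def by metis
  moreover have "\<forall>i\<le>j. periodic M' n ((act M' n ^^ i) (f x)) \<longrightarrow> (act M' n ^^ i) (f x) = 0"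
  proof (intro allI impI)
    fix i assume i: "i \<le> j" "periodic M' n ((act M' n ^^ i) (f x))"
    have p: "(act M n ^^ i) x \<in> points n" using iter_points[OF assms(2) x(1)] .
    have "periodic M n ((act M n ^^ i) x)"
      using conjm_periodic[OF assms(1,2) p] i(2) conjm_iter[OF assms(1)] by metis
    then have "(act M n ^^ i) x = 0" using x(3) i(1) by blast
    then show "(act M' n ^^ i) (f x) = 0" using conjm_iter[OF assms(1)] assms(1) unfolding conjm_def by metis
  qed
  ultimately show ?thesis using fx unfolding pretail_vertices_def by blast
qed

lemma conjm_iso: assumes "conjm M M' n f g" "n \<ge> 1" shows "pretail_trees_iso M M' n"
proof -
  have C: "conjm M' M n g f" using conjm_sym[OF assms(1)] .
  have V: "pretail_vertices M n \<subseteq> points n" "pretail_vertices M' n \<subseteq> points n"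
    unfolding pretail_vertices_def by auto
  have bij: "bij_betw f (pretail_vertices M n) (pretail_vertices M' n)"
  proof (rule bij_betw_byWitness[where f'=g])
    show "\<forall>a\<in>pretail_vertices M n. g (f a) = a" using assms(1) V unfolding conjm_def by blast
    show "\<forall>a\<in>pretail_vertices M' n. f (g a) = a" using assms(1) V unfolding conjm_def by blast
    show "f ` pretail_vertices M n \<subseteq> pretail_vertices M' n" using conjm_vert[OF assms(1,2)] by blast
    show "g ` pretail_vertices M' n \<subseteq> pretail_vertices M n" using conjm_vert[OF C assms(2)] by blast
  qed
  have f0: "f 0 = 0" using assms(1) unfolding conjm_def by blast
  have ch: "pretail_child M n x y \<longleftrightarrow> pretail_child M' n (f x) (f y)"
    if x: "x \<in> pretail_vertices M n" and y: "y \<in> pretail_vertices M n" for x y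
  proof -
    have xp: "x \<in> points n" and yp: "y \<in> points n" using x y V by auto
    have fxv: "f x \<in> pretail_vertices M' n" using conjm_vert[OF assms(1,2) x] .
    have inj: "\<And>u v. u \<in> points n \<Longrightarrow> v \<in> points n \<Longrightarrow> f u = f v \<Longrightarrow> u = v"
      using assms(1) unfolding conjm_def by metis
    have "f x = 0 \<longleftrightarrow> x = 0" using inj[OF xp zero_points[OF assms(2)]] f0 by auto
    moreover have "f y = act M' n (f x) \<longleftrightarrow> y = act M n x"
      using inj[OF yp act_points[OF assms(2)]] assms(1) unfolding conjm_def by metis
    ultimately show ?thesis using x fxv unfolding pretail_child_def by blast
  qed
  show ?thesis unfolding pretail_trees_iso_def using bij f0 ch by blast
qed



definition mc :: "nat \<Rightarrow> int^2^2 \<Rightarrow> int^2^2 \<Rightarrow> bool" where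
  "mc n A B \<longleftrightarrow> (\<forall>i j. [A$i$j = B$i$j] (mod int n))"

lemma mod2: "((a1::int) * (u mod m) + a2 * (v mod m)) mod m = (a1 * u + a2 * v) mod m"
  by (metis mod_add_eq mod_mult_right_eq)

lemma act_comp0: "act A n (act B n x) = act (A ** B) n x"
  unfolding act_def
  by (simp add: vec_eq_iff matrix_vector_mult_def matrix_matrix_mult_def sum_2 mod2, simp add: algebra_simps)

lemma act_cong: assumes "mc n C D" shows "act C n x = act D n x"
proof -
  have "(C *v x) $ i mod int n = (D *v x) $ i mod int n" for i
  proof -
    have "int n dvd (C$i$1 - D$i$1)" "int n dvd (C$i$2 - D$i$2)"
      using assms unfolding mc_def cong_iff_dvd_diff by (metis cong_sym_eq cong_iff_dvd_diff)+
    then have "int n dvd (C$i$1 - D$i$1) * x$1 + (C$i$2 - D$i$2) * x$2" by simp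
    then show ?thesis unfolding mod_eq_dvd_iff
      by (simp add: matrix_vector_mult_def sum_2 algebra_simps)
  qed
  then show ?thesis unfolding act_def by (simp add: vec_eq_iff)
qed

lemma act_id: assumes "x \<in> points n" shows "act (mat 1) n x = x"
  using assms unfolding act_def points_def by (simp add: vec_eq_iff)

lemma conjm_mat: assumes "n \<ge> 1" "mc n (P**M) (M'**P)" "mc n (Q**M') (M**Q)"
  "mc n (Q**P) (mat 1)" "mc n (P**Q) (mat 1)"
  shows "conjm M M' n (act P n) (act Q n)"
  unfolding conjm_def
  using act_comp0 act_cong[OF assms(2)] act_cong[OF assms(3)] act_cong[OF assms(4)] act_cong[OF assms(5)]
     act_id act_points[OF assms(1)] act_zero by metis



definition mk2 :: "int \<Rightarrow> int \<Rightarrow> int \<Rightarrow> int \<Rightarrow> int^2^2" where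
  "mk2 a b c d = (\<chi> i j. if i = 1 then (if j = 1 then a else b) else (if j = 1 then c else d))"

lemma mk2_nth[simp]: "mk2 a b c d $ 1 $ 1 = a" "mk2 a b c d $ 1 $ 2 = b"
  "mk2 a b c d $ 2 $ 1 = c" "mk2 a b c d $ 2 $ 2 = d"
  by (simp_all add: mk2_def)

lemma mk2_eq: "M = mk2 (M$1$1) (M$1$2) (M$2$1) (M$2$2)"
  by (simp add: vec_eq_iff forall_2)

lemma mk2_mult: "mk2 a b c d ** mk2 e f g h = mk2 (a*e+b*g) (a*f+b*h) (c*e+d*g) (c*f+d*h)"
  by (simp add: vec_eq_iff forall_2 matrix_matrix_mult_def sum_2)

lemma mat1_mk2: "(mat 1 :: int^2^2) = mk2 1 0 0 1"
  by (simp add: vec_eq_iff forall_2 mat_def)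

lemma mc_mk2: "mc n (mk2 a b c d) (mk2 a' b' c' d') \<longleftrightarrow>
   [a = a'] (mod int n) \<and> [b = b'] (mod int n) \<and> [c = c'] (mod int n) \<and> [d = d'] (mod int n)"
  by (simp add: mc_def forall_2)

lemma mk2_ext: "a = a' \<Longrightarrow> b = b' \<Longrightarrow> c = c' \<Longrightarrow> d = d' \<Longrightarrow> mc n (mk2 a b c d) (mk2 a' b' c' d')"
  by (simp add: mc_mk2)

lemma cyc: assumes "n \<ge> 1" "coprime (\<gamma>*x^2 + \<epsilon>*x*y - \<beta>*y^2) (int n)"
  shows "\<exists>f g. conjm (mk2 a (h*\<beta>*\<gamma>) h (a+h*\<epsilon>)) (mk2 a (h*\<beta>) (h*\<gamma>) (a+h*\<epsilon>)) n f g"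
proof -
  obtain u where u: "[(\<gamma>*x^2 + \<epsilon>*x*y - \<beta>*y^2) * u = 1] (mod int n)"
    using cong_solve_coprime_int[OF assms(2)] by blast
  let ?P = "mk2 x (\<beta>*y) y (\<gamma>*x+\<epsilon>*y)"
  let ?Q = "mk2 (u*(\<gamma>*x+\<epsilon>*y)) (-u*\<beta>*y) (-u*y) (u*x)"
  have "conjm (mk2 a (h*\<beta>*\<gamma>) h (a+h*\<epsilon>)) (mk2 a (h*\<beta>) (h*\<gamma>) (a+h*\<epsilon>)) n (act ?P n) (act ?Q n)"
  proof (rule conjm_mat[OF assms(1)])
    show "mc n (?P ** mk2 a (h*\<beta>*\<gamma>) h (a+h*\<epsilon>)) (mk2 a (h*\<beta>) (h*\<gamma>) (a+h*\<epsilon>) ** ?P)"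
      unfolding mk2_mult by (rule mk2_ext) (simp_all add: algebra_simps)
    show "mc n (?Q ** mk2 a (h*\<beta>) (h*\<gamma>) (a+h*\<epsilon>)) (mk2 a (h*\<beta>*\<gamma>) h (a+h*\<epsilon>) ** ?Q)"
      unfolding mk2_mult by (rule mk2_ext) (simp_all add: algebra_simps power2_eq_square)
    have u': "[u * (\<gamma>*x^2 + \<epsilon>*x*y - \<beta>*y^2) = 1] (mod int n)" using u by (simp add: mult.commute)
    show "mc n (?Q ** ?P) (mat 1)"
      unfolding mk2_mult mat1_mk2 mc_mk2 using u'
      by (simp add: algebra_simps power2_eq_square)
    show "mc n (?P ** ?Q) (mat 1)"
      unfolding mk2_mult mat1_mk2 mc_mk2 using u'
      by (simp add: algebra_simps power2_eq_square)
  qed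
  then show ?thesis by blast
qed

lemma shear: assumes "n \<ge> 1" "h \<noteq> 0" "2*a + h*\<epsilon> = 2*a' + h*\<epsilon>'"
  "a*(a+h*\<epsilon>) - h^2*\<beta>*\<gamma> = a'*(a'+h*\<epsilon>') - h^2*\<beta>'*\<gamma>'" "a' = a + k*h"
  shows "\<exists>f g. conjm (mk2 a (h*\<beta>*\<gamma>) h (a+h*\<epsilon>)) (mk2 a' (h*\<beta>'*\<gamma>') h (a'+h*\<epsilon>')) n f g"
proof -
  have e1: "a + h*\<epsilon> = a' + h*\<epsilon>' + k*h" using assms(3,5) by simp
  have "h * (h*\<beta>*\<gamma> + k*(a+h*\<epsilon>)) = h * (a'*k + h*\<beta>'*\<gamma>')"
  proof -
    have "h*\<epsilon> = h*(\<epsilon>' + 2*k)" using e1 assms(5) by (simp add: algebra_simps)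
    then have ee: "\<epsilon> = \<epsilon>' + 2*k" using assms(2) by simp
    show ?thesis using assms(4) unfolding assms(5) ee by (simp add: algebra_simps power2_eq_square)
  qed
  then have e2: "h*\<beta>*\<gamma> + k*(a+h*\<epsilon>) = a'*k + h*\<beta>'*\<gamma>'" using assms(2) by simp
  let ?P = "mk2 1 k 0 1" let ?Q = "mk2 1 (-k) 0 1"
  have "conjm (mk2 a (h*\<beta>*\<gamma>) h (a+h*\<epsilon>)) (mk2 a' (h*\<beta>'*\<gamma>') h (a'+h*\<epsilon>')) n (act ?P n) (act ?Q n)"
  proof (rule conjm_mat[OF assms(1)])
    show "mc n (?P ** mk2 a (h*\<beta>*\<gamma>) h (a+h*\<epsilon>)) (mk2 a' (h*\<beta>'*\<gamma>') h (a'+h*\<epsilon>') ** ?P)"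
      unfolding mk2_mult by (rule mk2_ext) (use assms(5) e1 e2 in \<open>simp_all add: algebra_simps\<close>)
    show "mc n (?Q ** mk2 a' (h*\<beta>'*\<gamma>') h (a'+h*\<epsilon>')) (mk2 a (h*\<beta>*\<gamma>) h (a+h*\<epsilon>) ** ?Q)"
      unfolding mk2_mult by (rule mk2_ext) (use assms(5) e1 e2 in \<open>simp_all add: algebra_simps\<close>)
    show "mc n (?Q ** ?P) (mat 1)" "mc n (?P ** ?Q) (mat 1)"
      unfolding mk2_mult mat1_mk2 by (rule mk2_ext, simp_all)+
  qed
  then show ?thesis by blast
qed



lemma dvd_prodS: assumes "finite S" "\<forall>q\<in>S. prime q" "prime (p::int)"
  shows "p dvd \<Prod>S \<longleftrightarrow> p \<in> S"
  using assms prime_dvd_prod_iff[OF assms(1,3), of id] primes_dvd_imp_eq by auto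

lemma cycvec: fixes \<beta> \<gamma> \<epsilon> :: int
  assumes "n \<ge> 1" "gcd \<beta> (gcd \<gamma> \<epsilon>) = 1"
  shows "\<exists>x y. coprime (\<gamma>*x^2 + \<epsilon>*x*y - \<beta>*y^2) (int n)"
proof -
  define SA where "SA = {p::int. prime p \<and> p dvd int n \<and> \<not> p dvd \<beta>}"
  define SB where "SB = {p::int. prime p \<and> p dvd int n \<and> p dvd \<beta> \<and> \<not> p dvd \<gamma>}"
  have fin: "finite {p::int. p dvd int n}"
  proof (rule finite_subset)
    show "{p::int. p dvd int n} \<subseteq> {-int n..int n}"
    proof
      fix p assume "p \<in> {p::int. p dvd int n}"
      then have "\<bar>p\<bar> \<le> \<bar>int n\<bar>" using assms(1) by (intro dvd_imp_le_int) auto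
      then show "p \<in> {-int n..int n}" by auto
    qed
  qed simp
  have fA: "finite SA" and fB: "finite SB"
    by (rule finite_subset[OF _ fin], auto simp: SA_def SB_def)+
  define x where "x = \<Prod>SA"
  define y where "y = \<Prod>SB"
  have dA: "prime p \<Longrightarrow> p dvd x \<longleftrightarrow> p \<in> SA" for p
    unfolding x_def by (rule dvd_prodS[OF fA]) (auto simp: SA_def)
  have dB: "prime p \<Longrightarrow> p dvd y \<longleftrightarrow> p \<in> SB" for p
    unfolding y_def by (rule dvd_prodS[OF fB]) (auto simp: SB_def)
  let ?Q = "\<gamma>*x^2 + \<epsilon>*x*y - \<beta>*y^2"
  have "coprime ?Q (int n)"
  proof (rule ccontr)
    assume nc: "\<not> coprime ?Q (int n)"
    let ?G = "gcd ?Q (int n)"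
    have "?G \<noteq> 0" using assms(1) by simp
    moreover have "\<not> is_unit ?G" using nc by (simp add: coprime_iff_gcd_eq_1)
    ultimately obtain p where p: "p dvd ?G" "prime p" using prime_divisor_exists by blast
    have pQ: "p dvd ?Q" and pn: "p dvd int n" using p(1) by auto
    have pr: "prime_elem p" using p(2) by (rule prime_imp_prime_elem)
    show False
    proof (cases "p dvd \<beta>")
      case False
      then have "p \<in> SA" "p \<notin> SB" using p(2) pn by (auto simp: SA_def SB_def)
      then have px: "p dvd x" and py: "\<not> p dvd y" using dA dB p(2) by auto
      have "p dvd \<gamma>*x^2 + \<epsilon>*x*y" using px by (simp add: power2_eq_square)
      moreover have "\<beta>*y^2 = (\<gamma>*x^2 + \<epsilon>*x*y) - ?Q" by simp
      ultimately have "p dvd \<beta>*y^2" using pQ by (metis dvd_diff)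
      then show False using False py pr by (simp add: prime_elem_dvd_mult_iff prime_elem_dvd_power_iff)
    next
      case pb: True
      show False
      proof (cases "p dvd \<gamma>")
        case False
        then have "p \<notin> SA" "p \<in> SB" using p(2) pn pb by (auto simp: SA_def SB_def)
        then have px: "\<not> p dvd x" and py: "p dvd y" using dA dB p(2) by auto
        have "p dvd \<epsilon>*x*y - \<beta>*y^2" using py by (simp add: power2_eq_square)
        moreover have "\<gamma>*x^2 = ?Q - (\<epsilon>*x*y - \<beta>*y^2)" by simp
        ultimately have "p dvd \<gamma>*x^2" using pQ by (metis dvd_diff)
        then show False using False px pr by (simp add: prime_elem_dvd_mult_iff prime_elem_dvd_power_iff)
      next
        case pc: True
        have pe: "\<not> p dvd \<epsilon>"
        proof
          assume "p dvd \<epsilon>"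
          then have "p dvd gcd \<beta> (gcd \<gamma> \<epsilon>)" using pb pc by simp
          then show False using assms(2) p(2) prime_ge_2_int[of p] by simp
        qed
        have "p \<notin> SA" "p \<notin> SB" using pb pc by (auto simp: SA_def SB_def)
        then have px: "\<not> p dvd x" and py: "\<not> p dvd y" using dA dB p(2) by auto
        have "p dvd \<gamma>*x^2 - \<beta>*y^2" using pb pc by simp
        moreover have "\<epsilon>*x*y = ?Q - (\<gamma>*x^2 - \<beta>*y^2)" by simp
        ultimately have "p dvd \<epsilon>*x*y" using pQ by (metis dvd_diff)
        then show False using pe px py pr by (simp add: prime_elem_dvd_mult_iff)
      qed
    qed
  qed
  then show ?thesis by blast
qed

lemma congr: fixes a a' h \<epsilon> \<epsilon>' \<beta> \<gamma> \<beta>' \<gamma>' :: int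
  assumes "h \<noteq> 0" "2*a + h*\<epsilon> = 2*a' + h*\<epsilon>'"
  "a*(a+h*\<epsilon>) - h^2*\<beta>*\<gamma> = a'*(a'+h*\<epsilon>') - h^2*\<beta>'*\<gamma>'"
  shows "\<exists>k. a' = a + k*h"
proof -
  have id1: "(a'-a)^2 + (a'-a)*h*\<epsilon>' - h^2*(\<beta>'*\<gamma>'-\<beta>*\<gamma>) =
     (a'*(a'+h*\<epsilon>') - h^2*\<beta>'*\<gamma>') - (a*(a+h*\<epsilon>) - h^2*\<beta>*\<gamma>) - a*((2*a'+h*\<epsilon>') - (2*a+h*\<epsilon>))"
    by (simp add: algebra_simps power2_eq_square)
  have h1: "(a'-a)^2 + (a'-a)*h*\<epsilon>' = h^2*(\<beta>'*\<gamma>'-\<beta>*\<gamma>)"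
    using id1 assms(2,3) by simp
  have h2: "2*(a'-a) = h*(\<epsilon>-\<epsilon>')" using assms(2) by (simp add: algebra_simps)
  have "h^2*((\<epsilon>-\<epsilon>')^2 + 2*(\<epsilon>-\<epsilon>')*\<epsilon>') = h^2*(4*(\<beta>'*\<gamma>'-\<beta>*\<gamma>))"
  proof -
    have "h^2*((\<epsilon>-\<epsilon>')^2 + 2*(\<epsilon>-\<epsilon>')*\<epsilon>') = (h*(\<epsilon>-\<epsilon>'))^2 + 2*(h*(\<epsilon>-\<epsilon>'))*h*\<epsilon>'"
      by (simp add: algebra_simps power2_eq_square)
    also have "\<dots> = (2*(a'-a))^2 + 2*(2*(a'-a))*h*\<epsilon>'" unfolding h2 ..
    also have "\<dots> = 4*((a'-a)^2 + (a'-a)*h*\<epsilon>')" by (simp add: algebra_simps power2_eq_square)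
    also have "\<dots> = h^2*(4*(\<beta>'*\<gamma>'-\<beta>*\<gamma>))" unfolding h1 by simp
    finally show ?thesis .
  qed
  then have h3: "(\<epsilon>-\<epsilon>')^2 + 2*(\<epsilon>-\<epsilon>')*\<epsilon>' = 4*(\<beta>'*\<gamma>'-\<beta>*\<gamma>)" using assms(1) by simp
  have "even (\<epsilon>-\<epsilon>')"
  proof (rule ccontr)
    assume "odd (\<epsilon>-\<epsilon>')"
    then have "odd ((\<epsilon>-\<epsilon>')^2 + 2*(\<epsilon>-\<epsilon>')*\<epsilon>')" by simp
    moreover have "even ((\<epsilon>-\<epsilon>')^2 + 2*(\<epsilon>-\<epsilon>')*\<epsilon>')" unfolding h3 by simp
    ultimately show False by blast
  qed
  then obtain f where f: "\<epsilon>-\<epsilon>' = 2*f" by blast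
  then have "2*a' = 2*(a + f*h)" using h2 by (simp add: algebra_simps)
  then have "a' = a + f*h" by simp
  then show ?thesis by blast
qed

lemma decomp: assumes "mgcd M \<noteq> 0"
  obtains \<beta> \<gamma> \<epsilon> where "M = mk2 (M$1$1) (mgcd M*\<beta>) (mgcd M*\<gamma>) (M$1$1 + mgcd M*\<epsilon>)" "gcd \<beta> (gcd \<gamma> \<epsilon>) = 1"
proof -
  let ?h = "mgcd M"
  have hb: "?h dvd M$1$2" and hc: "?h dvd M$2$1" and he: "?h dvd M$2$2 - M$1$1"
    unfolding mgcd_def by (meson gcd_dvd1 gcd_dvd2 dvd_trans)+
  obtain \<beta> where b: "M$1$2 = ?h*\<beta>" using hb by blast
  obtain \<gamma> where c: "M$2$1 = ?h*\<gamma>" using hc by blast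
  obtain \<epsilon> where e: "M$2$2 - M$1$1 = ?h*\<epsilon>" using he by blast
  have hpos: "?h > 0" using assms unfolding mgcd_def by (simp add: order.not_eq_order_implies_strict)
  have "?h = gcd (?h*\<beta>) (gcd (?h*\<gamma>) (?h*\<epsilon>))" using b c e unfolding mgcd_def by simp
  also have "\<dots> = ?h * gcd \<beta> (gcd \<gamma> \<epsilon>)" using hpos
    by (simp add: gcd_mult_distrib_int[symmetric])
  finally have G: "gcd \<beta> (gcd \<gamma> \<epsilon>) = 1" using hpos by simp
  have "M = mk2 (M$1$1) (?h*\<beta>) (?h*\<gamma>) (M$1$1 + ?h*\<epsilon>)"
    using b c e mk2_eq[of M] by (metis add.commute diff_add_cancel)
  from this G show thesis by (rule that)
qed

lemma trace_mk2: "trace (mk2 a b c d) = a + d" by (simp add: trace_def sum_2)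
lemma det_mk2: "det (mk2 a b c d) = a*d - b*c" by (simp add: det_2)

theorem corollary3p7:
  fixes M M' :: "int^2^2" and n :: nat
  assumes "trace M = trace M'" and "det M = det M'" and "mgcd M = mgcd M'"
    and "n \<ge> 1"
  shows "pretail_trees_iso M M' n"
proof (cases "mgcd M = 0")
  case True
  have z: "M$1$2 = 0" "M$2$1 = 0" "M$2$2 = M$1$1" using True unfolding mgcd_def by auto
  have z': "M'$1$2 = 0" "M'$2$1 = 0" "M'$2$2 = M'$1$1" using True assms(3) unfolding mgcd_def by auto
  have "trace M = 2 * M$1$1" "trace M' = 2 * M'$1$1" using z z' by (simp_all add: trace_def sum_2)
  then have "M$1$1 = M'$1$1" using assms(1) by simp
  then have "M = M'" using z z' mk2_eq[of M] mk2_eq[of M'] by metis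
  moreover have "conjm M M n id id" unfolding conjm_def by simp
  ultimately show ?thesis using conjm_iso assms(4) by blast
next
  case False
  define h where "h = mgcd M"
  have h0: "h \<noteq> 0" using False h_def by simp
  obtain \<beta> \<gamma> \<epsilon> where M0: "M = mk2 (M$1$1) (mgcd M*\<beta>) (mgcd M*\<gamma>) (M$1$1 + mgcd M*\<epsilon>)" and g: "gcd \<beta> (gcd \<gamma> \<epsilon>) = 1"
    by (rule decomp[OF False])
  have F': "mgcd M' \<noteq> 0" using False assms(3) by simp
  obtain \<beta>' \<gamma>' \<epsilon>' where M0': "M' = mk2 (M'$1$1) (mgcd M'*\<beta>') (mgcd M'*\<gamma>') (M'$1$1 + mgcd M'*\<epsilon>')" and g': "gcd \<beta>' (gcd \<gamma>' \<epsilon>') = 1"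
    by (rule decomp[OF F'])
  have M: "M = mk2 (M$1$1) (h*\<beta>) (h*\<gamma>) (M$1$1 + h*\<epsilon>)" unfolding h_def by (rule M0)
  have M': "M' = mk2 (M'$1$1) (h*\<beta>') (h*\<gamma>') (M'$1$1 + h*\<epsilon>')" unfolding h_def assms(3) by (rule M0')
  define a where "a = M$1$1"
  define a' where "a' = M'$1$1"
  have tr: "2*a + h*\<epsilon> = 2*a' + h*\<epsilon>'" using assms(1) M M' trace_mk2 a_def a'_def by (metis add.assoc mult_2)
  have dt: "a*(a+h*\<epsilon>) - h^2*\<beta>*\<gamma> = a'*(a'+h*\<epsilon>') - h^2*\<beta>'*\<gamma>'"
  proof -
    have "det M = a*(a+h*\<epsilon>) - h^2*\<beta>*\<gamma>" using M det_mk2 a_def by (metis mult.assoc mult.left_commute power2_eq_square)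
    moreover have "det M' = a'*(a'+h*\<epsilon>') - h^2*\<beta>'*\<gamma>'" using M' det_mk2 a'_def by (metis mult.assoc mult.left_commute power2_eq_square)
    ultimately show ?thesis using assms(2) by simp
  qed
  obtain k where k: "a' = a + k*h" using congr[OF h0 tr dt] by blast
  obtain x y where xy: "coprime (\<gamma>*x^2 + \<epsilon>*x*y - \<beta>*y^2) (int n)" using cycvec[OF assms(4) g] by blast
  obtain x' y' where xy': "coprime (\<gamma>'*x'^2 + \<epsilon>'*x'*y' - \<beta>'*y'^2) (int n)" using cycvec[OF assms(4) g'] by blast
  obtain f1 g1 where c1: "conjm (mk2 a (h*\<beta>*\<gamma>) h (a+h*\<epsilon>)) M n f1 g1"
    using cyc[OF assms(4) xy, of a h] M a_def by metis
  obtain f2 g2 where c2: "conjm (mk2 a (h*\<beta>*\<gamma>) h (a+h*\<epsilon>)) (mk2 a' (h*\<beta>'*\<gamma>') h (a'+h*\<epsilon>')) n f2 g2"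
    using shear[OF assms(4) h0 tr dt k] by blast
  obtain f3 g3 where c3: "conjm (mk2 a' (h*\<beta>'*\<gamma>') h (a'+h*\<epsilon>')) M' n f3 g3"
    using cyc[OF assms(4) xy', of a' h] M' a'_def by metis
  have "conjm M M' n (f3 \<circ> (f2 \<circ> g1)) ((f1 \<circ> g2) \<circ> g3)"
    by (rule conjm_trans[OF conjm_trans[OF conjm_sym[OF c1] c2] c3])
  then show ?thesis using conjm_iso assms(4) by blast
qed

end
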